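(* Consider the inexact Bregman proximal point algorithm described in the context, with $\Phi$ Legendre, and define the ergodic iterates $\breve p^K=\big(\sum_{k=0}^K\sigma_kp^k\big)/\big(\sum_{k=0}^K\sigma_k\big)$. Let $z\in\operatorname{dom}T\cap\operatorname{dom}\Phi$. Then for every $w\in T(z)$ and every $K\ge0$, $$\langle w,\breve p^K-z\rangle\le\frac{D_\Phi(z,z^0)}{\sum_{k=0}^K\sigma_k}.$$
   Context: Let $\mathbb{E}$ be a finite-dimensional Euclidean space, $\Gamma_0(\mathbb{E})$ the proper lsc convex functions $\mathbb{E}\to\mathbb{R}\cup\{+\infty\}$. $\Phi\in\Gamma_0(\mathbb{E})$ is Legendre if it is essentially smooth ($\operatorname{int}\operatorname{dom}\Phi\ne\emptyset$, differentiable there, $\|\nabla\Phi(z^\nu)\|\to\infty$ whenever $\operatorname{int}\operatorname{dom}\Phi\ni z^\nu\to z\in\operatorname{bdry}\operatorname{dom}\Phi$) and essentially strictly convex (strictly convex on every convex subset of $\operatorname{dom}\partial\Phi$); then $\nabla\Phi:\operatorname{int}\operatorname{dom}\Phi\to\operatorname{int}\operatorname{dom}\Phi^*$ is a bijection with inverse $\nabla\Phi^*$. $D_\Phi(z_1,z_2)=\Phi(z_1)-\Phi(z_2)-\langle\nabla\Phi(z_2),z_1-z_2\rangle$ if $z_1\in\operatorname{dom}\Phi$, $z_2\in\operatorname{int}\operatorname{dom}\Phi$, and $+\infty$ otherwise. Let $T:\mathbb{E}\rightrightarrows\mathbb{E}$ be maximal monotone and assume $\operatorname{int}\operatorname{dom}\Phi\cap\operatorname{dom}T\ne\emptyset$.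 Inexact Bregman proximal point algorithm: given $z^0\in\operatorname{int}\operatorname{dom}\Phi$, step sizes $\sigma_k\ge\sigma>0$ and tolerances $\rho_k\in[0,1)$, it generates triples $(z^{k+1},p^k,w^k)$ with $p^k\in\operatorname{dom}\Phi$, $w^k\in T(p^k)$, $\nabla\Phi(z^k)-\sigma_kw^k\in\operatorname{int}\operatorname{dom}\Phi^*$, $z^{k+1}=\nabla\Phi^*(\nabla\Phi(z^k)-\sigma_kw^k)\in\operatorname{int}\operatorname{dom}\Phi$, and $D_\Phi(p^k,z^{k+1})\le\rho_kD_\Phi(p^k,z^k)$. *)

theory Defs
  imports "HOL-Analysis.Analysis"
begin

text \<open>Extended-valued functions on a finite-dimensional Euclidean space are modelled
  as functions into ereal; the value \<open>\<infinity>\<close> plays the role of \<open>+\<infinity>\<close>.\<close>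

definition edom :: "('a \<Rightarrow> ereal) \<Rightarrow> 'a set" where
  "edom f = {x. f x < \<infinity>}"

definition proper_fun :: "('a \<Rightarrow> ereal) \<Rightarrow> bool" where
  "proper_fun f \<longleftrightarrow> edom f \<noteq> {} \<and> (\<forall>x. f x > -\<infinity>)"

definition lsc_fun :: "('a::topological_space \<Rightarrow> ereal) \<Rightarrow> bool" where
  "lsc_fun f \<longleftrightarrow> (\<forall>c::ereal. closed {x. f x \<le> c})"

definition econvex :: "('a::real_vector \<Rightarrow> ereal) \<Rightarrow> bool" where
  "econvex f \<longleftrightarrow> (\<forall>x y t. 0 \<le> t \<and> t \<le> 1 \<longrightarrow>
      f ((1 - t) *\<^sub>R x + t *\<^sub>R y) \<le> ereal (1 - t) * f x + ereal t * f y)"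

definition Gamma0 :: "('a::real_normed_vector \<Rightarrow> ereal) \<Rightarrow> bool" where
  "Gamma0 f \<longleftrightarrow> proper_fun f \<and> lsc_fun f \<and> econvex f"

definition differentiable_at_with :: "('a::real_inner \<Rightarrow> ereal) \<Rightarrow> 'a \<Rightarrow> 'a \<Rightarrow> bool" where
  "differentiable_at_with f x g \<longleftrightarrow>
     ((\<lambda>y. real_of_ereal (f y)) has_derivative (\<lambda>h. g \<bullet> h)) (at x)"

text \<open>Gradient (meaningful at points of \<open>int dom f\<close> where f is differentiable).\<close>
definition egrad :: "('a::real_inner \<Rightarrow> ereal) \<Rightarrow> 'a \<Rightarrow> 'a" where
  "egrad f x = (SOME g. differentiable_at_with f x g)"

definition essentially_smooth :: "('a::euclidean_space \<Rightarrow> ereal) \<Rightarrow> bool" where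
  "essentially_smooth f \<longleftrightarrow>
     interior (edom f) \<noteq> {} \<and>
     (\<forall>x \<in> interior (edom f). \<exists>g. differentiable_at_with f x g) \<and>
     (\<forall>X z. (\<forall>n. X n \<in> interior (edom f)) \<longrightarrow> X \<longlonglongrightarrow> z \<longrightarrow> z \<in> frontier (edom f) \<longrightarrow>
        filterlim (\<lambda>n. norm (egrad f (X n))) at_top sequentially)"

definition subdiff :: "('a::real_inner \<Rightarrow> ereal) \<Rightarrow> 'a \<Rightarrow> 'a set" where
  "subdiff f x = {g. f x < \<infinity> \<and> (\<forall>y. f y \<ge> f x + ereal (g \<bullet> (y - x)))}"

definition strictly_econvex_on :: "'a set \<Rightarrow> ('a::real_vector \<Rightarrow> ereal) \<Rightarrow> bool" where
  "strictly_econvex_on C f \<longleftrightarrow> (\<forall>x\<in>C. \<forall>y\<in>C. \<forall>t. x \<noteq> y \<and> 0 < t \<and> t < 1 \<longrightarrow>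
      f ((1 - t) *\<^sub>R x + t *\<^sub>R y) < ereal (1 - t) * f x + ereal t * f y)"

definition essentially_strictly_convex :: "('a::real_inner \<Rightarrow> ereal) \<Rightarrow> bool" where
  "essentially_strictly_convex f \<longleftrightarrow>
     (\<forall>C. convex C \<and> C \<subseteq> {x. subdiff f x \<noteq> {}} \<longrightarrow> strictly_econvex_on C f)"

definition Legendre :: "('a::euclidean_space \<Rightarrow> ereal) \<Rightarrow> bool" where
  "Legendre f \<longleftrightarrow> Gamma0 f \<and> essentially_smooth f \<and> essentially_strictly_convex f"

definition fconj :: "('a::real_inner \<Rightarrow> ereal) \<Rightarrow> 'a \<Rightarrow> ereal" where
  "fconj f y = (SUP x. ereal (x \<bullet> y) - f x)"

definition bregman :: "('a::real_inner \<Rightarrow> ereal) \<Rightarrow> 'a \<Rightarrow> 'a \<Rightarrow> ereal" where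
  "bregman f z1 z2 =
     (if z1 \<in> edom f \<and> z2 \<in> interior (edom f)
      then ereal (real_of_ereal (f z1) - real_of_ereal (f z2) - egrad f z2 \<bullet> (z1 - z2))
      else \<infinity>)"

definition monotone_op :: "('a::real_inner \<Rightarrow> 'a set) \<Rightarrow> bool" where
  "monotone_op T \<longleftrightarrow> (\<forall>x y u v. u \<in> T x \<and> v \<in> T y \<longrightarrow> (u - v) \<bullet> (x - y) \<ge> 0)"

definition maximal_monotone :: "('a::real_inner \<Rightarrow> 'a set) \<Rightarrow> bool" where
  "maximal_monotone T \<longleftrightarrow> monotone_op T \<and>
     (\<forall>x u. (\<forall>y v. v \<in> T y \<longrightarrow> (u - v) \<bullet> (x - y) \<ge> 0) \<longrightarrow> u \<in> T x)"

definition op_dom :: "('a \<Rightarrow> 'b set) \<Rightarrow> 'a set" where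
  "op_dom T = {x. T x \<noteq> {}}"

definition inexact_BPPA ::
  "('a::euclidean_space \<Rightarrow> ereal) \<Rightarrow> ('a \<Rightarrow> 'a set) \<Rightarrow> (nat \<Rightarrow> real) \<Rightarrow> real \<Rightarrow> (nat \<Rightarrow> real)
     \<Rightarrow> (nat \<Rightarrow> 'a) \<Rightarrow> (nat \<Rightarrow> 'a) \<Rightarrow> (nat \<Rightarrow> 'a) \<Rightarrow> bool" where
  "inexact_BPPA \<Phi> T \<sigma>s \<sigma> \<rho> z p w \<longleftrightarrow>
     z 0 \<in> interior (edom \<Phi>) \<and> \<sigma> > 0 \<and>
     (\<forall>k. \<sigma>s k \<ge> \<sigma> \<and> 0 \<le> \<rho> k \<and> \<rho> k < 1 \<and>
          p k \<in> edom \<Phi> \<and> w k \<in> T (p k) \<and>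
          egrad \<Phi> (z k) - \<sigma>s k *\<^sub>R w k \<in> interior (edom (fconj \<Phi>)) \<and>
          z (Suc k) = egrad (fconj \<Phi>) (egrad \<Phi> (z k) - \<sigma>s k *\<^sub>R w k) \<and>
          z (Suc k) \<in> interior (edom \<Phi>) \<and>
          bregman \<Phi> (p k) (z (Suc k)) \<le> ereal (\<rho> k) * bregman \<Phi> (p k) (z k))"

definition ergodic :: "(nat \<Rightarrow> real) \<Rightarrow> (nat \<Rightarrow> 'a::real_vector) \<Rightarrow> nat \<Rightarrow> 'a" where
  "ergodic \<sigma>s p K = (1 / (\<Sum>k\<le>K. \<sigma>s k)) *\<^sub>R (\<Sum>k\<le>K. \<sigma>s k *\<^sub>R p k)"

end

theory Submission
  imports Defs
begin


lemma lsc_seq: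
  fixes \<Phi> :: "'a::euclidean_space \<Rightarrow> ereal"
  assumes lsc: "lsc_fun \<Phi>" and vlim: "v \<longlonglongrightarrow> vb" and alim: "a \<longlonglongrightarrow> (al::real)"
    and le: "\<And>n. \<Phi> (v n) \<le> ereal (a n)"
  shows "\<Phi> vb \<le> ereal al"
proof -
  have "\<Phi> vb \<le> ereal (al + e)" if "e > 0" for e
  proof -
    have ev: "eventually (\<lambda>n. a n < al + e) sequentially"
      using alim that by (simp add: order_tendstoD(2))
    have "eventually (\<lambda>n. v n \<in> {x. \<Phi> x \<le> ereal (al + e)}) sequentially"
      using ev proof eventually_elim
        case (elim n)
        have "\<Phi> (v n) \<le> ereal (a n)" by (rule le)
        also have "\<dots> \<le> ereal (al + e)" using elim by simp
        finally show ?case by simp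
      qed
    moreover have "closed {x. \<Phi> x \<le> ereal (al + e)}" using lsc unfolding lsc_fun_def by blast
    ultimately have "vb \<in> {x. \<Phi> x \<le> ereal (al + e)}"
      using Lim_in_closed_set vlim by (metis trivial_limit_sequentially)
    then show ?thesis by simp
  qed
  then show ?thesis
    by (metis ereal_le_epsilon2 plus_ereal.simps(1))
qed



lemma coercive:
  fixes \<Phi> :: "'a::euclidean_space \<Rightarrow> ereal"
  assumes "y \<in> interior (edom (fconj \<Phi>))"
  shows "\<exists>c>0. \<exists>M. \<forall>v y'. norm (y' - y) \<le> c/2 \<longrightarrow> ereal (v \<bullet> y' + (c/2) * norm v - M) \<le> \<Phi> v"
proof -
  obtain e where e: "e > 0" "ball y e \<subseteq> edom (fconj \<Phi>)"
    using assms mem_interior by blast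
  define \<epsilon> where "\<epsilon> = e / 2"
  have \<epsilon>: "\<epsilon> > 0" "\<epsilon> < e" using e by (auto simp: \<epsilon>_def)
  define P where "P = (\<lambda>(s,b). y + (s*\<epsilon>) *\<^sub>R b) ` ({-1,1::real} \<times> Basis)"
  have finP: "finite P" unfolding P_def by auto
  define M where "M = Max ((\<lambda>q. real_of_ereal (fconj \<Phi> q)) ` P)"
  have key: "ereal (v \<bullet> q - M) \<le> \<Phi> v" if q: "q \<in> P" for q v
  proof -
    have "q \<in> ball y e" using q \<epsilon> unfolding P_def by (auto simp: dist_norm)
    then have lt: "fconj \<Phi> q < \<infinity>" using e unfolding edom_def by auto
    have "fconj \<Phi> q \<le> ereal M"
    proof (cases "fconj \<Phi> q")
      case (real r)
      have "r \<le> M" unfolding M_def using finP q real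
        by (metis (mono_tags, lifting) Max_ge finite_imageI image_eqI real_of_ereal.simps(1))
      then show ?thesis using real by simp
    qed (use lt in auto)
    moreover have "ereal (v \<bullet> q) - \<Phi> v \<le> fconj \<Phi> q"
      unfolding fconj_def by (rule SUP_upper) simp
    ultimately have *: "ereal (v \<bullet> q) - \<Phi> v \<le> ereal M" by simp
    show ?thesis
    proof (cases "\<Phi> v")
      case (real r)
      then show ?thesis using * by simp
    next
      case MInf then show ?thesis using * by simp
    qed simp
  qed
  define c where "c = \<epsilon> / real DIM('a)"
  have c: "c > 0" using \<epsilon> by (simp add: c_def)
  have "ereal (v \<bullet> y' + (c/2) * norm v - M) \<le> \<Phi> v" if y': "norm (y' - y) \<le> c/2" for v y'
  proof -
    define m where "m = Max ((\<lambda>b. \<bar>v \<bullet> b\<bar>) ` Basis)"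
    have "m \<in> (\<lambda>b. \<bar>v \<bullet> b\<bar>) ` Basis" unfolding m_def by (rule Max_in) auto
    then obtain b where b: "b \<in> Basis" "\<bar>v \<bullet> b\<bar> = m" by auto
    have mge: "\<bar>v \<bullet> b'\<bar> \<le> m" if "b' \<in> Basis" for b'
      unfolding m_def using that by (intro Max_ge) auto
    have "norm v \<le> (\<Sum>b\<in>Basis. \<bar>v \<bullet> b\<bar>)" by (rule norm_le_l1)
    also have "\<dots> \<le> real DIM('a) * m" using sum_bounded_above[of Basis "\<lambda>b. \<bar>v \<bullet> b\<bar>" m] mge
      by auto
    finally have nv: "norm v \<le> real DIM('a) * m" .
    have cnv: "c * norm v \<le> \<epsilon> * m" unfolding c_def using nv \<epsilon>
      by (simp add: field_simps mult_left_mono)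
    define s where "s = (if v \<bullet> b \<ge> 0 then 1 else -1::real)"
    define q where "q = y + (s*\<epsilon>) *\<^sub>R b"
    have qP: "q \<in> P" unfolding q_def P_def s_def using b by (auto intro!: image_eqI[where x="(if v \<bullet> b \<ge> 0 then 1 else -1, b)"])
    have vq: "v \<bullet> q = v \<bullet> y + \<epsilon> * m"
      unfolding q_def s_def using b \<epsilon> by (auto simp: inner_simps abs_if algebra_simps)
    have "v \<bullet> y' = v \<bullet> y + v \<bullet> (y' - y)" by (simp add: inner_simps)
    also have "\<dots> \<le> v \<bullet> y + norm v * norm (y' - y)"
      using norm_cauchy_schwarz[of v "y' - y"] by simp
    also have "\<dots> \<le> v \<bullet> y + norm v * (c/2)"
      using y' by (intro add_left_mono mult_left_mono) auto
    finally have "v \<bullet> y' + (c/2) * norm v - M \<le> v \<bullet> q - M" using vq cnv by (simp add: algebra_simps)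
    then have "ereal (v \<bullet> y' + (c/2) * norm v - M) \<le> ereal (v \<bullet> q - M)" by simp
    also have "\<dots> \<le> \<Phi> v" by (rule key[OF qP])
    finally show ?thesis .
  qed
  then show ?thesis using c by blast
qed



lemma exists_min:
  fixes \<Phi> :: "'a::euclidean_space \<Rightarrow> ereal"
  assumes lsc: "lsc_fun \<Phi>" and fin: "\<And>v. \<Phi> v > -\<infinity>" and v0: "\<Phi> v0 < \<infinity>"
    and coer: "\<And>v. ereal (v \<bullet> y' + c2 * norm v - M) \<le> \<Phi> v" and c2: "c2 > 0"
  shows "\<exists>x. y' \<in> subdiff \<Phi> x"
proof -
  define \<phi> where "\<phi> v = real_of_ereal (\<Phi> v)" for v
  define D where "D = edom \<Phi>"
  have \<Phi>D: "\<Phi> v = ereal (\<phi> v)" if "v \<in> D" for v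
    using that fin[of v] unfolding D_def edom_def \<phi>_def by (cases "\<Phi> v") auto
  define G where "G v = \<phi> v - v \<bullet> y'" for v
  have Glow: "c2 * norm v - M \<le> G v" if "v \<in> D" for v
    using coer[of v] \<Phi>D[OF that] unfolding G_def by (simp add: algebra_simps)
  have Glow2: "- M \<le> G v" if "v \<in> D" for v
    using Glow[OF that] c2 by (smt (verit) mult_nonneg_nonneg norm_ge_zero)
  have DnE: "D \<noteq> {}" using v0 unfolding D_def edom_def by auto
  define m where "m = Inf (G ` D)"
  have bdd: "bdd_below (G ` D)" using Glow2 by (auto intro!: bdd_belowI[where m="-M"])
  have mle: "m \<le> G v" if "v \<in> D" for v unfolding m_def using bdd that by (simp add: cInf_lower)
  have "\<exists>v\<in>D. G v < m + inverse (real (Suc n))" for n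
  proof -
    have "Inf (G ` D) < m + inverse (real (Suc n))" unfolding m_def by simp
    then obtain g where "g \<in> G ` D" "g < m + inverse (real (Suc n))"
      using cInf_lessD[of "G ` D"] DnE by blast
    then show ?thesis by auto
  qed
  then obtain vs where vsD: "\<And>n. vs n \<in> D" and vsG: "\<And>n. G (vs n) < m + inverse (real (Suc n))"
    by metis
  have "norm (vs n) \<le> (m + 1 + M) / c2" for n
  proof -
    have "inverse (real (Suc n)) \<le> 1" by (simp add: inverse_le_1_iff)
    then have "c2 * norm (vs n) - M \<le> m + 1" using Glow[OF vsD[of n]] vsG[of n] by linarith
    then show ?thesis using c2 by (simp add: field_simps)
  qed
  then have "bounded (range vs)" by (auto simp: bounded_iff)
  then obtain l r where r: "strict_mono r" and lim: "(vs \<circ> r) \<longlonglongrightarrow> l"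
    using bounded_imp_convergent_subsequence by blast
  define a where "a n = (vs (r n)) \<bullet> y' + m + inverse (real (Suc (r n)))" for n
  have L0: "(\<lambda>n. inverse (real (Suc (r n)))) \<longlonglongrightarrow> 0"
    using LIMSEQ_subseq_LIMSEQ[OF LIMSEQ_inverse_real_of_nat r] by (simp add: o_def)
  have L1: "(\<lambda>n. (vs (r n)) \<bullet> y') \<longlonglongrightarrow> l \<bullet> y'"
    using lim by (intro tendsto_intros) (simp add: o_def)
  have alim: "a \<longlonglongrightarrow> l \<bullet> y' + m + 0"
    using tendsto_add[OF tendsto_add[OF L1 tendsto_const[of m]] L0] unfolding a_def by simp
  have "\<Phi> ((vs \<circ> r) n) \<le> ereal (a n)" for n
    using \<Phi>D[OF vsD[of "r n"]] vsG[of "r n"] unfolding a_def G_def by simp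
  from lsc_seq[OF lsc lim alim this] have Pl: "\<Phi> l \<le> ereal (l \<bullet> y' + m)" by simp
  then have lD: "l \<in> D" unfolding D_def edom_def by auto
  have Gl: "G l \<le> m" using Pl \<Phi>D[OF lD] unfolding G_def by simp
  have "y' \<in> subdiff \<Phi> l"
    unfolding subdiff_def
  proof (intro CollectI conjI allI)
    show "\<Phi> l < \<infinity>" using lD unfolding D_def edom_def by auto
    fix v
    show "\<Phi> l + ereal (y' \<bullet> (v - l)) \<le> \<Phi> v"
    proof (cases "v \<in> D")
      case True
      have "G l \<le> G v" using Gl mle[OF True] by simp
      then show ?thesis using \<Phi>D[OF True] \<Phi>D[OF lD] unfolding G_def
        by (simp add: inner_simps inner_commute)
    next
      case False
      then show ?thesis unfolding D_def edom_def by simp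
    qed
  qed
  then show ?thesis by blast
qed

lemma min_unique:
  fixes \<Phi> :: "'a::euclidean_space \<Rightarrow> ereal"
  assumes cvx: "econvex \<Phi>" and sc: "essentially_strictly_convex \<Phi>"
    and fin: "\<And>v. \<Phi> v > -\<infinity>"
    and s1: "y \<in> subdiff \<Phi> x1" and s2: "y \<in> subdiff \<Phi> x2"
  shows "x1 = x2"
proof (rule ccontr)
  assume ne: "x1 \<noteq> x2"
  obtain a1 where a1: "\<Phi> x1 = ereal a1" using s1 fin[of x1] unfolding subdiff_def
    by (cases "\<Phi> x1") auto
  obtain a2 where a2: "\<Phi> x2 = ereal a2" using s2 fin[of x2] unfolding subdiff_def
    by (cases "\<Phi> x2") auto
  have sub1: "\<And>v. ereal (a1 + y \<bullet> (v - x1)) \<le> \<Phi> v" using s1 a1 unfolding subdiff_def by auto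
  have sub2: "\<And>v. ereal (a2 + y \<bullet> (v - x2)) \<le> \<Phi> v" using s2 a2 unfolding subdiff_def by auto
  have e1: "a1 + y \<bullet> (x2 - x1) \<le> a2" using sub1[of x2] a2 by simp
  have e2: "a2 + y \<bullet> (x1 - x2) \<le> a1" using sub2[of x1] a1 by simp
  have diff: "a2 - a1 = y \<bullet> x2 - y \<bullet> x1" using e1 e2 by (simp add: inner_simps)
  define pt where "pt t = (1 - t) *\<^sub>R x1 + t *\<^sub>R x2" for t
  have ptup: "\<Phi> (pt t) \<le> ereal ((1 - t) * a1 + t * a2)" if "0 \<le> t" "t \<le> 1" for t
    using cvx that unfolding econvex_def pt_def a1 a2
    by (metis a1 a2 times_ereal.simps(1) plus_ereal.simps(1))
  have ptlow: "ereal (a1 + y \<bullet> (pt t - x1)) \<le> \<Phi> (pt t)" for t by (rule sub1)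
  have yx: "y \<bullet> (pt t - x1) = t * (a2 - a1)" for t
    unfolding pt_def diff by (simp add: inner_simps algebra_simps)
  have subpt: "y \<in> subdiff \<Phi> (pt t)" if tt: "0 \<le> t" "t \<le> 1" for t
  proof -
    obtain b where b: "\<Phi> (pt t) = ereal b" using ptup[OF tt] fin[of "pt t"]
      by (cases "\<Phi> (pt t)") auto
    have bl: "b \<le> (1 - t) * a1 + t * a2" using ptup[OF tt] b by simp
    show ?thesis unfolding subdiff_def
    proof (intro CollectI conjI allI)
      show "\<Phi> (pt t) < \<infinity>" using b by simp
      fix v
      have "b + y \<bullet> (v - pt t) \<le> a1 + y \<bullet> (v - x1)"
      proof -
        have "y \<bullet> (v - pt t) = y \<bullet> (v - x1) - y \<bullet> (pt t - x1)" by (simp add: inner_simps)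
        then show ?thesis using bl yx[of t] by (simp add: algebra_simps)
      qed
      then have "ereal (b + y \<bullet> (v - pt t)) \<le> \<Phi> v" using sub1[of v] by (meson ereal_less_eq(3) order_trans)
      then show "\<Phi> (pt t) + ereal (y \<bullet> (v - pt t)) \<le> \<Phi> v" using b by simp
    qed
  qed
  have C: "convex (closed_segment x1 x2)" by simp
  have "closed_segment x1 x2 \<subseteq> {x. subdiff \<Phi> x \<noteq> {}}"
    using subpt unfolding closed_segment_def pt_def by auto
  then have "strictly_econvex_on (closed_segment x1 x2) \<Phi>"
    using sc C unfolding essentially_strictly_convex_def by blast
  then have st: "\<forall>x\<in>closed_segment x1 x2. \<forall>y\<in>closed_segment x1 x2. \<forall>t. x \<noteq> y \<and> 0 < t \<and> t < 1 \<longrightarrow>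
      \<Phi> ((1 - t) *\<^sub>R x + t *\<^sub>R y) < ereal (1 - t) * \<Phi> x + ereal t * \<Phi> y"
    unfolding strictly_econvex_on_def by blast
  have "x1 \<in> closed_segment x1 x2" "x2 \<in> closed_segment x1 x2" by auto
  with st have "x1 \<noteq> x2 \<and> 0 < (1/2::real) \<and> (1/2::real) < 1 \<longrightarrow>
      \<Phi> ((1 - 1/2) *\<^sub>R x1 + (1/2) *\<^sub>R x2) < ereal (1 - 1/2) * \<Phi> x1 + ereal (1/2) * \<Phi> x2"
    by blast
  then have "\<Phi> (pt (1/2)) < ereal (1 - 1/2) * \<Phi> x1 + ereal (1/2) * \<Phi> x2"
    using ne unfolding pt_def by simp
  then have "\<Phi> (pt (1/2)) < ereal ((1/2) * a1 + (1/2) * a2)" using a1 a2 by simp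
  moreover have "ereal (a1 + (1/2) * (a2 - a1)) \<le> \<Phi> (pt (1/2))" using ptlow[of "1/2"] yx[of "1/2"] by simp
  moreover have "a1 + (1/2) * (a2 - a1) = (1/2) * a1 + (1/2) * a2" by (simp add: field_simps)
  ultimately show False by (metis leD)
qed



lemma conj_at_sub:
  fixes \<Phi> :: "'a::euclidean_space \<Rightarrow> ereal"
  assumes fin: "\<And>v. \<Phi> v > -\<infinity>" and s: "y \<in> subdiff \<Phi> x"
  shows "fconj \<Phi> y = ereal (x \<bullet> y) - \<Phi> x"
proof (rule antisym)
  obtain b where b: "\<Phi> x = ereal b" using s fin[of x] unfolding subdiff_def by (cases "\<Phi> x") auto
  have sub: "ereal (b + y \<bullet> (v - x)) \<le> \<Phi> v" for v using s b unfolding subdiff_def by auto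
  show "fconj \<Phi> y \<le> ereal (x \<bullet> y) - \<Phi> x"
    unfolding fconj_def
  proof (rule SUP_least)
    fix v
    show "ereal (v \<bullet> y) - \<Phi> v \<le> ereal (x \<bullet> y) - \<Phi> x"
    proof (cases "\<Phi> v")
      case (real r)
      have "b + y \<bullet> (v - x) \<le> r" using sub[of v] real by simp
      then show ?thesis using real b by (simp add: inner_simps inner_commute)
    next
      case MInf then show ?thesis using fin[of v] by simp
    qed simp
  qed
  show "ereal (x \<bullet> y) - \<Phi> x \<le> fconj \<Phi> y"
    unfolding fconj_def by (rule SUP_upper) simp
qed

lemma conj_deriv:
  fixes \<Phi> :: "'a::euclidean_space \<Rightarrow> ereal"
  assumes lsc: "lsc_fun \<Phi>" and fin: "\<And>v. \<Phi> v > -\<infinity>" and cvx: "econvex \<Phi>"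
    and sc: "essentially_strictly_convex \<Phi>"
    and c: "c > 0" and coer: "\<And>v y'. norm (y' - y) \<le> c/2 \<Longrightarrow> ereal (v \<bullet> y' + (c/2) * norm v - M) \<le> \<Phi> v"
    and sx: "y \<in> subdiff \<Phi> x"
  shows "differentiable_at_with (fconj \<Phi>) y x"
proof -
  obtain a where a: "\<Phi> x = ereal a" using sx fin[of x] unfolding subdiff_def by (cases "\<Phi> x") auto
  have subx: "ereal (a + y \<bullet> (v - x)) \<le> \<Phi> v" for v using sx a unfolding subdiff_def by auto
  have cont: "\<exists>d>0. \<forall>y' x'. norm (y' - y) < d \<longrightarrow> y' \<in> subdiff \<Phi> x' \<longrightarrow> norm (x' - x) \<le> e"
    if e: "e > 0" for e
  proof (rule ccontr)
    assume "\<not> ?thesis"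
    then have "\<forall>d>0. \<exists>y' x'. norm (y' - y) < d \<and> y' \<in> subdiff \<Phi> x' \<and> norm (x' - x) > e"
      by (auto simp: not_le)
    then have "\<forall>n. \<exists>y' x'. norm (y' - y) < min (c/2) (inverse (real (Suc n))) \<and> y' \<in> subdiff \<Phi> x' \<and> norm (x' - x) > e"
    proof (intro allI)
      fix n
      assume H: "\<forall>d>0. \<exists>y' x'. norm (y' - y) < d \<and> y' \<in> subdiff \<Phi> x' \<and> norm (x' - x) > e"
      have "min (c/2) (inverse (real (Suc n))) > 0" using c by simp
      then show "\<exists>y' x'. norm (y' - y) < min (c/2) (inverse (real (Suc n))) \<and> y' \<in> subdiff \<Phi> x' \<and> norm (x' - x) > e"
        using H by blast
    qed
    then obtain ys xs where ysn: "\<And>n. norm (ys n - y) < min (c/2) (inverse (real (Suc n)))"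
      and sxs: "\<And>n. ys n \<in> subdiff \<Phi> (xs n)" and far: "\<And>n. norm (xs n - x) > e"
      by metis
    have bn: "\<Phi> (xs n) = ereal (real_of_ereal (\<Phi> (xs n)))" for n
      using sxs[of n] fin[of "xs n"] unfolding subdiff_def by (cases "\<Phi> (xs n)") auto
    have subn: "\<Phi> (xs n) + ereal (ys n \<bullet> (x - xs n)) \<le> ereal a" for n
      using sxs[of n] a unfolding subdiff_def by (metis (mono_tags, lifting) mem_Collect_eq)
    have ysc: "norm (ys n - y) \<le> c/2" for n using ysn[of n] by simp
    have bnd: "norm (xs n) \<le> 2 * (a + M + (norm y + c/2) * norm x) / c" for n
    proof -
      define b where "b = real_of_ereal (\<Phi> (xs n))"
      have 1: "xs n \<bullet> ys n + (c/2) * norm (xs n) - M \<le> b"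
      proof -
        have "ereal (xs n \<bullet> ys n + (c/2) * norm (xs n) - M) \<le> ereal b"
          using coer[OF ysc[of n], of "xs n"] bn[of n] unfolding b_def by metis
        then show ?thesis by simp
      qed
      have 2: "b + ys n \<bullet> (x - xs n) \<le> a"
      proof -
        have "ereal b + ereal (ys n \<bullet> (x - xs n)) \<le> ereal a"
          using subn[of n] bn[of n] unfolding b_def by metis
        then show ?thesis by simp
      qed
      have "norm (ys n) \<le> norm y + c/2" using ysc[of n] norm_triangle_ineq2[of "ys n" y] by linarith
      then have "- (ys n \<bullet> x) \<le> (norm y + c/2) * norm x"
        using norm_cauchy_schwarz[of "ys n" x] Cauchy_Schwarz_ineq2[of "ys n" x]
        by (smt (verit, best) mult_right_mono norm_ge_zero abs_le_iff)
      then have "(c/2) * norm (xs n) \<le> a + M + (norm y + c/2) * norm x"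
        using 1 2 by (simp add: inner_simps inner_commute algebra_simps)
      then show ?thesis using c by (simp add: field_simps)
    qed
    then have "bounded (range xs)" by (auto simp: bounded_iff)
    then obtain xl r where r: "strict_mono r" and lim: "(xs \<circ> r) \<longlonglongrightarrow> xl"
      using bounded_imp_convergent_subsequence by blast
    have ylim: "ys \<longlonglongrightarrow> y"
    proof (rule LIM_zero_cancel, rule LIMSEQ_norm_0)
      fix n show "norm (ys n - y) < 1 / real (Suc n)" using ysn[of n] by (simp add: inverse_eq_divide)
    qed
    have ylr: "(\<lambda>n. ys (r n)) \<longlonglongrightarrow> y" using LIMSEQ_subseq_LIMSEQ[OF ylim r] by (simp add: o_def)
    have xlr: "(\<lambda>n. xs (r n)) \<longlonglongrightarrow> xl" using lim by (simp add: o_def)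
    have alim: "(\<lambda>n. a - ys (r n) \<bullet> (x - xs (r n))) \<longlonglongrightarrow> a - y \<bullet> (x - xl)"
      by (intro tendsto_intros ylr xlr)
    have "\<Phi> ((xs \<circ> r) n) \<le> ereal (a - ys (r n) \<bullet> (x - xs (r n)))" for n
    proof -
      define q where "q = real_of_ereal (\<Phi> (xs (r n)))"
      have qq: "\<Phi> (xs (r n)) = ereal q" using bn[of "r n"] unfolding q_def .
      have "ereal q + ereal (ys (r n) \<bullet> (x - xs (r n))) \<le> ereal a" using subn[of "r n"] qq by metis
      then have "q \<le> a - ys (r n) \<bullet> (x - xs (r n))" by simp
      then show ?thesis using qq by (simp add: o_def)
    qed
    from lsc_seq[OF lsc lim alim this] have Pxl: "\<Phi> xl \<le> ereal (a - y \<bullet> (x - xl))" .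
    have "y \<in> subdiff \<Phi> xl"
      unfolding subdiff_def
    proof (intro CollectI conjI allI)
      show "\<Phi> xl < \<infinity>" using Pxl by auto
      fix v
      obtain q where q: "\<Phi> xl = ereal q" using Pxl fin[of xl] by (cases "\<Phi> xl") auto
      have "q + y \<bullet> (v - xl) \<le> a + y \<bullet> (v - x)" using Pxl q by (simp add: inner_simps)
      then have "ereal (q + y \<bullet> (v - xl)) \<le> \<Phi> v" using subx[of v] by (meson ereal_less_eq(3) order_trans)
      then show "\<Phi> xl + ereal (y \<bullet> (v - xl)) \<le> \<Phi> v" using q by simp
    qed
    then have "xl = x" using min_unique[OF cvx sc fin] sx by blast
    moreover have "xl \<in> {z. e \<le> norm (z - x)}"
    proof (rule Lim_in_closed_set[OF _ _ _ lim])
      show "closed {z. e \<le> norm (z - x)}"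
        by (intro closed_Collect_le continuous_intros)
      show "\<forall>\<^sub>F n in sequentially. (xs \<circ> r) n \<in> {z. e \<le> norm (z - x)}"
        using far by (auto intro!: always_eventually less_imp_le)
    qed simp
    ultimately show False using e by simp
  qed
  have fy: "fconj \<Phi> y = ereal (x \<bullet> y - a)" using conj_at_sub[OF fin sx] a by simp
  show ?thesis
    unfolding differentiable_at_with_def has_derivative_at_alt
  proof (intro conjI allI impI)
    show "bounded_linear ((\<bullet>) x)" by (rule bounded_linear_inner_right)
    fix e :: real assume e: "e > 0"
    obtain d1 where d1: "d1 > 0" "\<And>y' x'. norm (y' - y) < d1 \<Longrightarrow> y' \<in> subdiff \<Phi> x' \<Longrightarrow> norm (x' - x) \<le> e"
      using cont[OF e] by blast
    define d where "d = min d1 (c/2)"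
    have "norm (real_of_ereal (fconj \<Phi> y') - real_of_ereal (fconj \<Phi> y) - x \<bullet> (y' - y)) \<le> e * norm (y' - y)"
      if y': "norm (y' - y) < d" for y'
    proof -
      have y'c: "norm (y' - y) \<le> c/2" using y' by (simp add: d_def)
      obtain x' where sx': "y' \<in> subdiff \<Phi> x'"
        using exists_min[OF lsc fin _ coer[OF y'c] _] a c by fastforce
      have nx: "norm (x' - x) \<le> e" using d1(2)[OF _ sx'] y' by (simp add: d_def)
      obtain b where b: "\<Phi> x' = ereal b" using sx' fin[of x'] unfolding subdiff_def by (cases "\<Phi> x'") auto
      have fy': "fconj \<Phi> y' = ereal (x' \<bullet> y' - b)" using conj_at_sub[OF fin sx'] b by simp
      have s1: "b + y' \<bullet> (x - x') \<le> a" using sx' b a unfolding subdiff_def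
        by (metis (mono_tags, lifting) ereal_less_eq(3) mem_Collect_eq plus_ereal.simps(1))
      have s2: "a + y \<bullet> (x' - x) \<le> b" using subx[of x'] b by simp
      define E where "E = (x' \<bullet> y' - b) - (x \<bullet> y - a) - x \<bullet> (y' - y)"
      have E1: "0 \<le> E" using s1 unfolding E_def by (simp add: inner_simps inner_commute algebra_simps)
      have E2: "E \<le> (x' - x) \<bullet> (y' - y)" using s2 unfolding E_def by (simp add: inner_simps inner_commute algebra_simps)
      also have "\<dots> \<le> norm (x' - x) * norm (y' - y)" by (rule norm_cauchy_schwarz)
      also have "\<dots> \<le> e * norm (y' - y)" using nx by (simp add: mult_right_mono)
      finally show ?thesis using E1 fy fy' unfolding E_def by simp
    qed
    moreover have "d > 0" using d1 c by (simp add: d_def)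
    ultimately show "\<exists>d>0. \<forall>y'. norm (y' - y) < d \<longrightarrow>
        norm (real_of_ereal (fconj \<Phi> y') - real_of_ereal (fconj \<Phi> y) - x \<bullet> (y' - y)) \<le> e * norm (y' - y)"
      by blast
  qed
qed



lemma grad_eq_sub:
  fixes \<Phi> :: "'a::euclidean_space \<Rightarrow> ereal"
  assumes fin: "\<And>v. \<Phi> v > -\<infinity>" and zi: "z \<in> interior (edom \<Phi>)"
    and dg: "differentiable_at_with \<Phi> z g" and s: "y \<in> subdiff \<Phi> z"
  shows "g = y"
proof -
  define \<phi> where "\<phi> v = real_of_ereal (\<Phi> v)" for v
  have d1: "(\<phi> has_derivative (\<lambda>h. g \<bullet> h)) (at z)" using dg unfolding differentiable_at_with_def \<phi>_def .
  have d2: "((\<lambda>v. y \<bullet> v) has_derivative (\<lambda>h. y \<bullet> h)) (at z)"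
    by (rule bounded_linear_imp_has_derivative[OF bounded_linear_inner_right])
  have d: "((\<lambda>v. \<phi> v - y \<bullet> v) has_derivative (\<lambda>h. g \<bullet> h - y \<bullet> h)) (at z)"
    by (rule has_derivative_diff[OF d1 d2])
  have fz: "\<Phi> z = ereal (\<phi> z)" using s fin[of z] unfolding subdiff_def \<phi>_def by (cases "\<Phi> z") auto
  have ev: "eventually (\<lambda>v. v \<in> interior (edom \<Phi>)) (at z)"
    using eventually_nhds_in_open[OF open_interior zi] by (simp add: eventually_at_filter eventually_mono)
  have "eventually (\<lambda>v. \<phi> z - y \<bullet> z \<le> \<phi> v - y \<bullet> v) (at z)"
    using ev
  proof eventually_elim
    case (elim v)
    then have "\<Phi> v < \<infinity>" using interior_subset unfolding edom_def by blast
    then have fv: "\<Phi> v = ereal (\<phi> v)" using fin[of v] unfolding \<phi>_def by (cases "\<Phi> v") auto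
    have "\<Phi> z + ereal (y \<bullet> (v - z)) \<le> \<Phi> v" using s unfolding subdiff_def by blast
    then have "\<phi> z + y \<bullet> (v - z) \<le> \<phi> v" using fz fv by (metis ereal_less_eq(3) plus_ereal.simps(1))
    then show ?case by (simp add: inner_simps)
  qed
  from has_derivative_local_min[OF d this] have "(\<lambda>h. g \<bullet> h - y \<bullet> h) = (\<lambda>h. 0)" .
  then have "g \<bullet> (g - y) - y \<bullet> (g - y) = 0" by metis
  then have "(g - y) \<bullet> (g - y) = 0" by (simp add: inner_diff_left)
  then show ?thesis by simp
qed

lemma breg_nonneg:
  fixes \<Phi> :: "'a::euclidean_space \<Rightarrow> ereal"
  assumes fin: "\<And>v. \<Phi> v > -\<infinity>" and cvx: "econvex \<Phi>"
    and p: "p \<in> edom \<Phi>" and zi: "z \<in> interior (edom \<Phi>)"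
    and dg: "differentiable_at_with \<Phi> z g"
  shows "0 \<le> real_of_ereal (\<Phi> p) - real_of_ereal (\<Phi> z) - g \<bullet> (p - z)"
proof (rule ccontr)
  define \<phi> where "\<phi> v = real_of_ereal (\<Phi> v)" for v
  assume "\<not> ?thesis"
  then have lt: "\<phi> p - \<phi> z < g \<bullet> (p - z)" unfolding \<phi>_def by simp
  define A where "A = \<phi> p - \<phi> z"
  define Dd where "Dd = g \<bullet> (p - z)"
  have pz: "p \<noteq> z" using lt by auto
  then have np: "norm (p - z) > 0" by simp
  define e where "e = (Dd - A) / (2 * norm (p - z))"
  have e: "e > 0" using lt np unfolding e_def A_def Dd_def by simp
  obtain d where d: "d > 0" "\<And>y. norm (y - z) < d \<Longrightarrow> norm (\<phi> y - \<phi> z - g \<bullet> (y - z)) \<le> e * norm (y - z)"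
    using dg e unfolding differentiable_at_with_def has_derivative_at_alt \<phi>_def by blast
  define t where "t = min (1/2) (d / (2 * norm (p - z)))"
  have t: "0 < t" "t < 1" using d np by (auto simp: t_def)
  have tn: "t * norm (p - z) < d"
  proof -
    have "t * norm (p - z) \<le> (d / (2 * norm (p - z))) * norm (p - z)"
      unfolding t_def by (intro mult_right_mono) auto
    also have "\<dots> = d / 2" using np by (simp add: field_simps)
    finally show ?thesis using d by simp
  qed
  define y where "y = (1 - t) *\<^sub>R z + t *\<^sub>R p"
  have yz: "y - z = t *\<^sub>R (p - z)" unfolding y_def by (simp add: algebra_simps)
  have nyz: "norm (y - z) = t * norm (p - z)" using yz t by simp
  have fz: "\<Phi> z = ereal (\<phi> z)" using zi interior_subset fin[of z] unfolding edom_def \<phi>_def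
    by (cases "\<Phi> z") auto
  have fp: "\<Phi> p = ereal (\<phi> p)" using p fin[of p] unfolding edom_def \<phi>_def by (cases "\<Phi> p") auto
  have "\<Phi> y \<le> ereal (1 - t) * \<Phi> z + ereal t * \<Phi> p"
    using cvx t unfolding econvex_def y_def by auto
  then have "\<Phi> y \<le> ereal ((1 - t) * \<phi> z + t * \<phi> p)" using fz fp by simp
  then have up: "\<phi> y \<le> \<phi> z + t * A" unfolding A_def using fin[of y] unfolding \<phi>_def
    by (cases "\<Phi> y") (auto simp: algebra_simps)
  have "norm (\<phi> y - \<phi> z - g \<bullet> (y - z)) \<le> e * norm (y - z)" using d(2)[of y] nyz tn by metis
  then have "\<phi> y - \<phi> z - t * Dd \<ge> - (e * (t * norm (p - z)))"
    using nyz yz t unfolding Dd_def by (simp add: inner_simps abs_le_iff)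
  moreover have "e * (t * norm (p - z)) = t * ((Dd - A) / 2)" unfolding e_def using np by (simp add: field_simps)
  ultimately have "\<phi> y - \<phi> z \<ge> t * ((Dd + A) / 2)" by (simp add: field_simps)
  moreover have "t * ((Dd + A) / 2) > t * A"
  proof -
    have "(Dd + A) / 2 > A" using lt unfolding A_def Dd_def by simp
    then show ?thesis using t by (simp add: mult_strict_left_mono)
  qed
  ultimately show False using up by simp
qed



lemma grad_step:
  fixes \<Phi> :: "'a::euclidean_space \<Rightarrow> ereal"
  assumes L: "Legendre \<Phi>"
    and yi: "y \<in> interior (edom (fconj \<Phi>))"
    and zi: "egrad (fconj \<Phi>) y \<in> interior (edom \<Phi>)"
  shows "egrad \<Phi> (egrad (fconj \<Phi>) y) = y"
proof -
  have G: "proper_fun \<Phi>" "lsc_fun \<Phi>" "econvex \<Phi>" and sc: "essentially_strictly_convex \<Phi>"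
    and es: "essentially_smooth \<Phi>"
    using L unfolding Legendre_def Gamma0_def by auto
  have fin: "\<And>v. \<Phi> v > -\<infinity>" using G(1) unfolding proper_fun_def by auto
  obtain v0 where v0: "\<Phi> v0 < \<infinity>" using G(1) unfolding proper_fun_def edom_def by auto
  obtain c M where c: "c > 0" and coer: "\<And>v y'. norm (y' - y) \<le> c/2 \<Longrightarrow> ereal (v \<bullet> y' + (c/2) * norm v - M) \<le> \<Phi> v"
    using coercive[OF yi] by blast
  obtain x where sx: "y \<in> subdiff \<Phi> x"
    using exists_min[OF G(2) fin v0 coer[of y] _] c by fastforce
  have dx: "differentiable_at_with (fconj \<Phi>) y x"
    by (rule conj_deriv[OF G(2) fin G(3) sc c coer sx])
  have "differentiable_at_with (fconj \<Phi>) y (egrad (fconj \<Phi>) y)"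
    unfolding egrad_def using dx by (rule someI)
  then have "(\<lambda>h. egrad (fconj \<Phi>) y \<bullet> h) = (\<lambda>h. x \<bullet> h)"
    using dx unfolding differentiable_at_with_def by (rule has_derivative_unique)
  then have "egrad (fconj \<Phi>) y \<bullet> (egrad (fconj \<Phi>) y - x) = x \<bullet> (egrad (fconj \<Phi>) y - x)" by metis
  then have "(egrad (fconj \<Phi>) y - x) \<bullet> (egrad (fconj \<Phi>) y - x) = 0" by (simp add: inner_diff_left)
  then have ex: "egrad (fconj \<Phi>) y = x" by simp
  have xi: "x \<in> interior (edom \<Phi>)" using zi ex by simp
  obtain g where "differentiable_at_with \<Phi> x g" using es xi unfolding essentially_smooth_def by blast
  then have "differentiable_at_with \<Phi> x (egrad \<Phi> x)" unfolding egrad_def by (rule someI)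
  from grad_eq_sub[OF fin xi this sx] show ?thesis using ex by simp
qed

theorem mainTheorem10:
  fixes \<Phi> :: "'a::euclidean_space \<Rightarrow> ereal"
    and T :: "'a \<Rightarrow> 'a set"
    and \<sigma>s \<rho> :: "nat \<Rightarrow> real" and \<sigma> :: real
    and z p w :: "nat \<Rightarrow> 'a"
    and x u :: 'a and K :: nat
  assumes "Legendre \<Phi>"
    and "maximal_monotone T"
    and "interior (edom \<Phi>) \<inter> op_dom T \<noteq> {}"
    and "inexact_BPPA \<Phi> T \<sigma>s \<sigma> \<rho> z p w"
    and "x \<in> op_dom T \<inter> edom \<Phi>"
    and "u \<in> T x"
  shows "ereal (u \<bullet> (ergodic \<sigma>s p K - x)) \<le> bregman \<Phi> x (z 0) / ereal (\<Sum>k\<le>K. \<sigma>s k)"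
proof -
  note L = assms(1)
  have G: "proper_fun \<Phi>" "econvex \<Phi>" and es: "essentially_smooth \<Phi>"
    using L unfolding Legendre_def Gamma0_def by auto
  have fin: "\<And>v. \<Phi> v > -\<infinity>" using G(1) unfolding proper_fun_def by auto
  have mono: "monotone_op T" using assms(2) unfolding maximal_monotone_def by simp
  have A: "z 0 \<in> interior (edom \<Phi>)" "\<sigma> > 0" using assms(4) unfolding inexact_BPPA_def by auto
  have B: "\<sigma>s k \<ge> \<sigma>" "0 \<le> \<rho> k" "\<rho> k < 1" "p k \<in> edom \<Phi>" "w k \<in> T (p k)"
    "egrad \<Phi> (z k) - \<sigma>s k *\<^sub>R w k \<in> interior (edom (fconj \<Phi>))"
    "z (Suc k) = egrad (fconj \<Phi>) (egrad \<Phi> (z k) - \<sigma>s k *\<^sub>R w k)"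
    "z (Suc k) \<in> interior (edom \<Phi>)"
    "bregman \<Phi> (p k) (z (Suc k)) \<le> ereal (\<rho> k) * bregman \<Phi> (p k) (z k)" for k
    using assms(4) unfolding inexact_BPPA_def by blast+
  have zint: "z k \<in> interior (edom \<Phi>)" for k using A(1) B(8) by (cases k) auto
  have dg: "differentiable_at_with \<Phi> (z k) (egrad \<Phi> (z k))" for k
  proof -
    obtain g where "differentiable_at_with \<Phi> (z k) g" using es zint[of k] unfolding essentially_smooth_def by blast
    then show ?thesis unfolding egrad_def by (rule someI)
  qed
  have grad: "egrad \<Phi> (z (Suc k)) = egrad \<Phi> (z k) - \<sigma>s k *\<^sub>R w k" for k
    using grad_step[OF L B(6)[of k]] B(7)[of k] B(8)[of k] by simp
  define \<phi> where "\<phi> v = real_of_ereal (\<Phi> v)" for v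
  define Dr where "Dr a b = \<phi> a - \<phi> b - egrad \<Phi> b \<bullet> (a - b)" for a b
  have xd: "x \<in> edom \<Phi>" using assms(5) by simp
  have breg: "bregman \<Phi> a (z k) = ereal (Dr a (z k))" if "a \<in> edom \<Phi>" for a k
    using that zint[of k] unfolding bregman_def Dr_def \<phi>_def by simp
  have Dnn: "0 \<le> Dr a (z k)" if "a \<in> edom \<Phi>" for a k
    using breg_nonneg[OF fin G(2) that zint[of k] dg[of k]] unfolding Dr_def \<phi>_def .
  have step: "\<sigma>s k * (u \<bullet> (p k - x)) \<le> Dr x (z k) - Dr x (z (Suc k))" for k
  proof -
    have r: "Dr (p k) (z (Suc k)) \<le> \<rho> k * Dr (p k) (z k)"
      using B(9)[of k] breg[OF B(4)[of k], of "Suc k"] breg[OF B(4)[of k], of k] by simp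
    have r2: "\<rho> k * Dr (p k) (z k) \<le> Dr (p k) (z k)"
      using B(3)[of k] B(2)[of k] Dnn[OF B(4)[of k], of k] by (metis mult_left_le_one_le less_imp_le)
    have id: "\<sigma>s k * (w k \<bullet> (p k - x)) = Dr x (z k) - Dr x (z (Suc k)) - Dr (p k) (z k) + Dr (p k) (z (Suc k))"
      unfolding Dr_def grad by (simp add: inner_simps algebra_simps)
    have m: "0 \<le> (w k - u) \<bullet> (p k - x)" using mono B(5)[of k] assms(6) unfolding monotone_op_def by blast
    have "u \<bullet> (p k - x) \<le> w k \<bullet> (p k - x)" using m by (simp add: inner_diff_left)
    then have "\<sigma>s k * (u \<bullet> (p k - x)) \<le> \<sigma>s k * (w k \<bullet> (p k - x))"
      using B(1)[of k] A(2) by (intro mult_left_mono) auto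
    then show ?thesis using id r r2 by linarith
  qed
  have sum: "(\<Sum>k\<le>n. \<sigma>s k * (u \<bullet> (p k - x))) \<le> Dr x (z 0) - Dr x (z (Suc n))" for n
  proof (induction n)
    case 0 then show ?case using step[of 0] by simp
  next
    case (Suc n) then show ?case using step[of "Suc n"] by simp
  qed
  define S where "S = (\<Sum>k\<le>K. \<sigma>s k)"
  have Spos: "S > 0" unfolding S_def
  proof -
    have "(\<Sum>k\<le>K. \<sigma>s k) \<ge> \<sigma>s 0" using B(1) A(2)
      by (intro member_le_sum) (auto intro: order_trans[OF less_imp_le])
    then show "(\<Sum>k\<le>K. \<sigma>s k) > 0" using B(1)[of 0] A(2) by linarith
  qed
  have lhs: "(\<Sum>k\<le>K. \<sigma>s k * (u \<bullet> (p k - x))) = u \<bullet> ((\<Sum>k\<le>K. \<sigma>s k *\<^sub>R p k) - S *\<^sub>R x)"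
    unfolding S_def by (simp add: inner_sum_right inner_diff_right sum_subtractf sum_distrib_right scaleR_sum_left algebra_simps)
  have erg: "S * (u \<bullet> (ergodic \<sigma>s p K - x)) = u \<bullet> ((\<Sum>k\<le>K. \<sigma>s k *\<^sub>R p k) - S *\<^sub>R x)"
    unfolding ergodic_def S_def[symmetric] using Spos by (simp add: inner_diff_right algebra_simps)
  have "S * (u \<bullet> (ergodic \<sigma>s p K - x)) \<le> Dr x (z 0)"
    using sum[of K] Dnn[OF xd, of "Suc K"] lhs erg by linarith
  then have "u \<bullet> (ergodic \<sigma>s p K - x) \<le> Dr x (z 0) / S" using Spos by (simp add: field_simps)
  then show ?thesis using breg[OF xd, of 0] Spos unfolding S_def by simp
qed

end
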